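(* For every $\varepsilon>0$ there is a connected graph $G$ such that \[ \frac{\operatorname{cdim}(G)}{\operatorname{mdim}(G)}\leq\varepsilon. \]
   Context: All graphs are finite, simple, undirected and nonempty. For distinct vertices $v,w$, $\kappa(v,w)$ is the maximum number of internally vertex-disjoint $v$–$w$ paths (an edge $vw$ counts as one such path); $\kappa(v,v)=\infty$. For an ordered vertex set $W=(w_1,\ldots,w_k)$, $r_G(v,W)=[\kappa(v,w_1),\ldots,\kappa(v,w_k)]$. $W$ is resolving if $r_G(v_1,W)=r_G(v_2,W)$ implies $v_1=v_2$. The connectivity dimension $\operatorname{cdim}(G)$ is the minimum cardinality of a resolving set. The metric dimension $\operatorname{mdim}(G)$ of a connected graph is defined analogously with the distance $d(v,w)$ in place of $\kappa(v,w)$: it is the minimum cardinality of a set $W=(w_1,\dots,w_k)$ such that the vectors $[d(v,w_1),\ldots,d(v,w_k)]$ are pairwise distinct over $v\in V(G)$. *)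

theory Defs
  imports Main "HOL-Library.Extended_Nat"
begin

definition simple_graph :: "'a set \<Rightarrow> ('a \<Rightarrow> 'a \<Rightarrow> bool) \<Rightarrow> bool" where
  "simple_graph V E \<longleftrightarrow> finite V \<and> V \<noteq> {} \<and>
     (\<forall>x y. E x y \<longrightarrow> x \<in> V \<and> y \<in> V) \<and>
     (\<forall>x y. E x y \<longrightarrow> E y x) \<and> (\<forall>x. \<not> E x x)"

definition is_path :: "'a set \<Rightarrow> ('a \<Rightarrow> 'a \<Rightarrow> bool) \<Rightarrow> 'a \<Rightarrow> 'a \<Rightarrow> 'a list \<Rightarrow> bool" where
  "is_path V E v w p \<longleftrightarrow> p \<noteq> [] \<and> hd p = v \<and> last p = w \<and> distinct p \<and>
     set p \<subseteq> V \<and> (\<forall>i. Suc i < length p \<longrightarrow> E (p ! i) (p ! Suc i))"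

definition interior :: "'a list \<Rightarrow> 'a set" where
  "interior p = set (butlast (tl p))"

definition connected_graph :: "'a set \<Rightarrow> ('a \<Rightarrow> 'a \<Rightarrow> bool) \<Rightarrow> bool" where
  "connected_graph V E \<longleftrightarrow> simple_graph V E \<and>
     (\<forall>v\<in>V. \<forall>w\<in>V. \<exists>p. is_path V E v w p)"

definition kappa :: "'a set \<Rightarrow> ('a \<Rightarrow> 'a \<Rightarrow> bool) \<Rightarrow> 'a \<Rightarrow> 'a \<Rightarrow> enat" where
  "kappa V E v w = (if v = w then \<infinity> else
     enat (Max {card P | P. P \<subseteq> {p. is_path V E v w p} \<and>
        (\<forall>p\<in>P. \<forall>q\<in>P. p \<noteq> q \<longrightarrow> interior p \<inter> interior q = {})}))"

definition gdist :: "'a set \<Rightarrow> ('a \<Rightarrow> 'a \<Rightarrow> bool) \<Rightarrow> 'a \<Rightarrow> 'a \<Rightarrow> nat" where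
  "gdist V E v w = (LEAST n. \<exists>p. is_path V E v w p \<and> length p = Suc n)"

definition cdim :: "'a set \<Rightarrow> ('a \<Rightarrow> 'a \<Rightarrow> bool) \<Rightarrow> nat" where
  "cdim V E = (LEAST k. \<exists>W. distinct W \<and> set W \<subseteq> V \<and> length W = k \<and>
     (\<forall>x\<in>V. \<forall>y\<in>V. map (kappa V E x) W = map (kappa V E y) W \<longrightarrow> x = y))"

definition mdim :: "'a set \<Rightarrow> ('a \<Rightarrow> 'a \<Rightarrow> bool) \<Rightarrow> nat" where
  "mdim V E = (LEAST k. \<exists>W. distinct W \<and> set W \<subseteq> V \<and> length W = k \<and>
     (\<forall>x\<in>V. \<forall>y\<in>V. map (gdist V E x) W = map (gdist V E y) W \<longrightarrow> x = y))"

end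

theory Submission
  imports Defs
begin

lemma path1: "a \<in> V \<Longrightarrow> is_path V E a a [a]"
  by (simp add: is_path_def)

lemma path2: "E a b \<Longrightarrow> a \<in> V \<Longrightarrow> b \<in> V \<Longrightarrow> a \<noteq> b \<Longrightarrow> is_path V E a b [a,b]"
  by (auto simp: is_path_def less_Suc_eq)

lemma path3: "E a b \<Longrightarrow> E b c \<Longrightarrow> a \<in> V \<Longrightarrow> b \<in> V \<Longrightarrow> c \<in> V \<Longrightarrow> a \<noteq> b \<Longrightarrow> a \<noteq> c
   \<Longrightarrow> b \<noteq> c \<Longrightarrow> is_path V E a c [a,b,c]"
  by (auto simp: is_path_def less_Suc_eq)

lemma path_shape:
  assumes "is_path V E v w p" "v \<noteq> w"
  obtains u rest where "p = v # u # rest" "E v u"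
    "rest = [] \<Longrightarrow> u = w" "rest \<noteq> [] \<Longrightarrow> u \<in> interior p \<and> u \<noteq> w"
proof -
  from assms obtain a l where p: "p = a # l" unfolding is_path_def by (cases p) auto
  with assms have a: "a = v" unfolding is_path_def by auto
  have "l \<noteq> []" using assms p a unfolding is_path_def by auto
  then obtain u rest where l: "l = u # rest" by (cases l) auto
  have e: "E v u" using assms p a l unfolding is_path_def by force
  have r1: "rest = [] \<Longrightarrow> u = w" using assms p l unfolding is_path_def by auto
  have r2: "rest \<noteq> [] \<Longrightarrow> u \<in> interior p \<and> u \<noteq> w"
  proof -
    assume rn: "rest \<noteq> []"
    have "butlast (u # rest) = u # butlast rest" using rn by simp
    hence "u \<in> interior p" unfolding interior_def p l by simp
    moreover have "last rest = w" using assms p l rn unfolding is_path_def by auto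
    moreover have "u \<notin> set rest" using assms p l unfolding is_path_def by auto
    ultimately show ?thesis using rn last_in_set by metis
  qed
  show thesis using that[of u rest] p a l e r1 r2 by blast
qed

lemma kappa_universal:
  assumes g: "simple_graph V E" and wV: "w \<in> V" and univ: "\<And>x. x \<in> V \<Longrightarrow> x \<noteq> w \<Longrightarrow> E x w"
    and vV: "v \<in> V" and vw: "v \<noteq> w"
  shows "kappa V E v w = enat (card {u. E v u})"
proof -
  define N where "N = {u. E v u}"
  have NV: "N \<subseteq> V" using g unfolding N_def simple_graph_def by auto
  have finN: "finite N" using NV g finite_subset unfolding simple_graph_def by auto
  define S where "S = {card P | P. P \<subseteq> {p. is_path V E v w p} \<and>
        (\<forall>p\<in>P. \<forall>q\<in>P. p \<noteq> q \<longrightarrow> interior p \<inter> interior q = {})}"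
  have ub: "x \<le> card N" if "x \<in> S" for x
  proof -
    obtain P where x: "x = card P" and P: "P \<subseteq> {p. is_path V E v w p}"
      and D: "\<forall>p\<in>P. \<forall>q\<in>P. p \<noteq> q \<longrightarrow> interior p \<inter> interior q = {}"
      using \<open>x \<in> S\<close> unfolding S_def by blast
    have "inj_on (\<lambda>p. p ! 1) P"
    proof (rule inj_onI)
      fix p q assume pP: "p \<in> P" and qP: "q \<in> P" and eq: "p ! 1 = q ! 1"
      have pp: "is_path V E v w p" using pP P by blast
      have qp: "is_path V E v w q" using qP P by blast
      obtain u rest where p: "p = v # u # rest" "E v u"
        "rest = [] \<Longrightarrow> u = w" "rest \<noteq> [] \<Longrightarrow> u \<in> interior p \<and> u \<noteq> w"
        using path_shape[OF pp vw] by metis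
      obtain u' rest' where q: "q = v # u' # rest'" "E v u'"
        "rest' = [] \<Longrightarrow> u' = w" "rest' \<noteq> [] \<Longrightarrow> u' \<in> interior q \<and> u' \<noteq> w"
        using path_shape[OF qp vw] by metis
      have uu: "u = u'" using eq p q by simp
      show "p = q"
      proof (cases "rest = []")
        case True
        then have "u = w" using p by simp
        then have "rest' = []" using q uu by auto
        then show ?thesis using p q uu True by simp
      next
        case False
        then have "u \<in> interior p" "u \<noteq> w" using p by auto
        then have "rest' \<noteq> []" using q uu by auto
        then have "u \<in> interior q" using q uu by auto
        then show ?thesis using D pP qP \<open>u \<in> interior p\<close> by blast
      qed
    qed
    moreover have "(\<lambda>p. p ! 1) ` P \<subseteq> N"
    proof
      fix y assume "y \<in> (\<lambda>p. p ! 1) ` P"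
      then obtain p where pP: "p \<in> P" and y: "y = p ! 1" by blast
      have pp: "is_path V E v w p" using pP P by blast
      obtain u rest where "p = v # u # rest" "E v u"
        "rest = [] \<Longrightarrow> u = w" "rest \<noteq> [] \<Longrightarrow> u \<in> interior p \<and> u \<noteq> w"
        using path_shape[OF pp vw] by metis
      then show "y \<in> N" using y unfolding N_def by simp
    qed
    ultimately show ?thesis using x card_inj_on_le finN by blast
  qed
  define f where "f u = (if u = w then [v,w] else [v,u,w])" for u
  define P where "P = f ` N"
  have injf: "inj_on f N"
  proof (rule inj_onI)
    fix x y assume "x \<in> N" "y \<in> N" and fe: "f x = f y"
    show "x = y"
    proof (cases "x = w")
      case True
      then show ?thesis using fe unfolding f_def by (cases "y = w") simp_all
    next
      case False
      then show ?thesis using fe unfolding f_def by (cases "y = w") simp_all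
    qed
  qed
  have intf: "interior (f u) = (if u = w then {} else {u})" for u
    unfolding f_def interior_def by simp
  have sym: "E x y \<Longrightarrow> E y x" for x y using g unfolding simple_graph_def by blast
  have irr: "\<not> E x x" for x using g unfolding simple_graph_def by blast
  have "card N \<in> S"
  proof -
    have c1: "card P = card N" unfolding P_def using injf by (simp add: card_image)
    have c2: "P \<subseteq> {p. is_path V E v w p}"
    proof
      fix p assume "p \<in> P"
      then obtain u where u: "u \<in> N" and p: "p = f u" unfolding P_def by blast
      have uV: "u \<in> V" using u NV by auto
      have "is_path V E v w p"
      proof (cases "u = w")
        case True
        then have "p = [v,w]" using p unfolding f_def by simp
        moreover have "E v w" using univ vV vw by blast
        ultimately show ?thesis using path2[of E v w V] vV wV vw by blast
      next
        case False
        then have pe: "p = [v,u,w]" using p unfolding f_def by simp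
        have evu: "E v u" using u unfolding N_def by simp
        moreover have "E u w" using univ uV False by blast
        moreover have "v \<noteq> u" using irr evu by metis
        ultimately show ?thesis using pe path3[of E v u w V] uV vV wV vw False by blast
      qed
      then show "p \<in> {p. is_path V E v w p}" by simp
    qed
    have c3: "\<forall>p\<in>P. \<forall>q\<in>P. p \<noteq> q \<longrightarrow> interior p \<inter> interior q = {}"
    proof (intro ballI impI)
      fix p q assume "p \<in> P" "q \<in> P" "p \<noteq> q"
      then obtain a b where "p = f a" "q = f b" "a \<noteq> b" unfolding P_def by blast
      then show "interior p \<inter> interior q = {}" using intf by simp
    qed
    show ?thesis unfolding S_def
      by (rule CollectI, rule exI[of _ P], intro conjI c1[symmetric] c2 c3)
  qed
  moreover have "finite S"
  proof -
    have "S \<subseteq> {..card N}" using ub by auto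
    then show ?thesis using finite_subset by blast
  qed
  ultimately have "Max S = card N" using ub by (intro Max_eqI) blast+
  then show ?thesis unfolding kappa_def S_def N_def using vw by simp
qed


lemma kappa_inf_iff: "kappa V E x w = \<infinity> \<longleftrightarrow> x = w"
  unfolding kappa_def by simp

definition GV :: "nat \<Rightarrow> nat set" where "GV m = {0..2*m}"
definition GE :: "nat \<Rightarrow> nat \<Rightarrow> nat \<Rightarrow> bool" where
  "GE m x y \<longleftrightarrow> x \<le> 2*m \<and> y \<le> 2*m \<and> x \<noteq> y \<and> (x = 0 \<or> y = 0 \<or> 2*m < x + y)"

lemma G_simple: "simple_graph (GV m) (GE m)"
  unfolding simple_graph_def GV_def GE_def by auto

lemma G_univ: "x \<in> GV m \<Longrightarrow> x \<noteq> 0 \<Longrightarrow> GE m x 0"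
  unfolding GV_def GE_def by auto

lemma G_path: assumes "x \<in> GV m" "y \<in> GV m"
  shows "\<exists>p. is_path (GV m) (GE m) x y p \<and> length p \<le> 3"
proof -
  have z: "0 \<in> GV m" unfolding GV_def by simp
  have sym: "GE m a b \<Longrightarrow> GE m b a" for a b unfolding GE_def by auto
  show ?thesis
  proof (cases "x = y")
    case True then show ?thesis using path1[OF assms(1), of "GE m"] by force
  next
    case ne: False
    show ?thesis
    proof (cases "GE m x y")
      case True then show ?thesis using path2[of "GE m" x y "GV m", OF True assms ne] by force
    next
      case False
      then have "x \<noteq> 0" "y \<noteq> 0" using assms ne unfolding GE_def GV_def by auto
      then have "is_path (GV m) (GE m) x y [x,0,y]"
        using path3[of "GE m" x 0 y "GV m"] G_univ[of x m] G_univ[of y m] sym assms z ne by blast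
      then show ?thesis by force
    qed
  qed
qed

lemma G_conn: "connected_graph (GV m) (GE m)"
  unfolding connected_graph_def using G_simple G_path by blast

lemma G_nbrs: assumes "1 \<le> i" "i \<le> 2*m"
  shows "{u. GE m i u} = insert 0 ({2*m+1-i..2*m} - {i})"
  using assms unfolding GE_def by auto

lemma G_deg: assumes "1 \<le> i" "i \<le> 2*m"
  shows "card {u. GE m i u} = (if i \<le> m then i + 1 else i)"
proof -
  have "0 \<notin> {2*m+1-i..2*m} - {i}" using assms by auto
  then have "card {u. GE m i u} = Suc (card ({2*m+1-i..2*m} - {i}))"
    using G_nbrs[OF assms] by simp
  moreover have "card {2*m+1-i..2*m} = i" using assms by simp
  moreover have "i \<in> {2*m+1-i..2*m} \<longleftrightarrow> \<not> i \<le> m" using assms by auto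
  ultimately show ?thesis by (auto simp: card_Diff_singleton)
qed

lemma G_kappa0: assumes "x \<in> GV m" "x \<noteq> 0"
  shows "kappa (GV m) (GE m) x 0 = enat (if x \<le> m then x + 1 else x)"
proof -
  have "kappa (GV m) (GE m) x 0 = enat (card {u. GE m x u})"
    by (rule kappa_universal[OF G_simple _ G_univ assms]) (auto simp: GV_def)
  also have "\<dots> = enat (if x \<le> m then x + 1 else x)"
    using G_deg[of x m] assms unfolding GV_def by simp
  finally show ?thesis .
qed

lemma G_cdim: assumes "1 \<le> m" shows "cdim (GV m) (GE m) \<le> 2"
proof -
  have "\<exists>W. distinct W \<and> set W \<subseteq> GV m \<and> length W = 2 \<and>
     (\<forall>x\<in>GV m. \<forall>y\<in>GV m. map (kappa (GV m) (GE m) x) W = map (kappa (GV m) (GE m) y) W \<longrightarrow> x = y)"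
  proof (intro exI[of _ "[0,m]"] conjI ballI impI)
    show "distinct [0, m]" using assms by simp
    show "set [0, m] \<subseteq> GV m" unfolding GV_def by auto
    show "length [0, m] = 2" by simp
    fix x y assume xV: "x \<in> GV m" and yV: "y \<in> GV m"
      and eq: "map (kappa (GV m) (GE m) x) [0, m] = map (kappa (GV m) (GE m) y) [0, m]"
    have e0: "kappa (GV m) (GE m) x 0 = kappa (GV m) (GE m) y 0"
      and em: "kappa (GV m) (GE m) x m = kappa (GV m) (GE m) y m" using eq by auto
    show "x = y"
    proof (cases "x = 0 \<or> y = 0 \<or> x = m \<or> y = m")
      case True
      then show ?thesis using e0 em kappa_inf_iff by metis
    next
      case False
      then have "enat (if x \<le> m then x + 1 else x) = enat (if y \<le> m then y + 1 else y)"
        using e0 G_kappa0 xV yV by simp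
      then show ?thesis using False by (auto split: if_splits)
    qed
  qed
  then show ?thesis unfolding cdim_def by (rule Least_le)
qed

lemma G_gdist2: assumes "x \<in> GV m" "y \<in> GV m" shows "gdist (GV m) (GE m) x y \<le> 2"
proof -
  obtain p where p: "is_path (GV m) (GE m) x y p" "length p \<le> 3" using G_path[OF assms] by blast
  have "length p \<noteq> 0" using p unfolding is_path_def by simp
  then obtain n where n: "length p = Suc n" by (cases "length p") auto
  then have "gdist (GV m) (GE m) x y \<le> n" unfolding gdist_def using p by (intro Least_le) blast
  then show ?thesis using n p by simp
qed

lemma G_gdist0: assumes "x \<in> GV m" "y \<in> GV m" "gdist (GV m) (GE m) x y = 0" shows "x = y"
proof -
  obtain p where p: "is_path (GV m) (GE m) x y p" "length p \<le> 3" using G_path[OF assms(1,2)] by blast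
  have "length p \<noteq> 0" using p unfolding is_path_def by simp
  then obtain n where n: "length p = Suc n" by (cases "length p") auto
  have "\<exists>q. is_path (GV m) (GE m) x y q \<and> length q = Suc (gdist (GV m) (GE m) x y)"
    unfolding gdist_def by (rule LeastI[of _ n]) (use p n in blast)
  then obtain q where "is_path (GV m) (GE m) x y q" "length q = Suc 0" using assms(3) by auto
  then show ?thesis unfolding is_path_def by (cases q) auto
qed

lemma G_gdist_self: assumes "x \<in> GV m" shows "gdist (GV m) (GE m) x x = 0"
  unfolding gdist_def using path1[OF assms, of "GE m"] by (intro Least_eq_0) force

lemma G_mdim: assumes "card (GV m) > 3 ^ K" shows "mdim (GV m) (GE m) \<ge> Suc K"
proof -
  let ?R = "\<lambda>k. \<exists>W. distinct W \<and> set W \<subseteq> GV m \<and> length W = k \<and>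
     (\<forall>x\<in>GV m. \<forall>y\<in>GV m. map (gdist (GV m) (GE m) x) W = map (gdist (GV m) (GE m) y) W \<longrightarrow> x = y)"
  have fin: "finite (GV m)" unfolding GV_def by simp
  have ex: "?R (card (GV m))"
  proof (intro exI[of _ "sorted_list_of_set (GV m)"] conjI ballI impI)
    show "distinct (sorted_list_of_set (GV m))" by simp
    show "set (sorted_list_of_set (GV m)) \<subseteq> GV m" using fin by simp
    show "length (sorted_list_of_set (GV m)) = card (GV m)" by simp
    fix x y assume xV: "x \<in> GV m" and yV: "y \<in> GV m"
      and eq: "map (gdist (GV m) (GE m) x) (sorted_list_of_set (GV m)) =
               map (gdist (GV m) (GE m) y) (sorted_list_of_set (GV m))"
    have "x \<in> set (sorted_list_of_set (GV m))" using fin xV by simp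
    then have "gdist (GV m) (GE m) x x = gdist (GV m) (GE m) y x" using eq by simp
    then have "gdist (GV m) (GE m) y x = 0" using G_gdist_self[OF xV] by simp
    then show "x = y" using G_gdist0[OF yV xV] by simp
  qed
  have lb: "k \<ge> Suc K" if RK: "?R k" for k
  proof -
    obtain W where W: "set W \<subseteq> GV m" "length W = k"
      "\<forall>x\<in>GV m. \<forall>y\<in>GV m. map (gdist (GV m) (GE m) x) W = map (gdist (GV m) (GE m) y) W \<longrightarrow> x = y"
      using RK by blast
    let ?g = "\<lambda>x. map (gdist (GV m) (GE m) x) W"
    let ?L = "{xs. set xs \<subseteq> {0,1,2::nat} \<and> length xs = k}"
    have "inj_on ?g (GV m)" using W(3) by (intro inj_onI) blast
    moreover have "?g ` GV m \<subseteq> ?L"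
    proof
      fix z assume "z \<in> ?g ` GV m"
      then obtain x where xV: "x \<in> GV m" and z: "z = ?g x" by blast
      have "set z \<subseteq> {0,1,2}"
      proof
        fix d assume "d \<in> set z"
        then obtain w where "w \<in> set W" "d = gdist (GV m) (GE m) x w" using z by auto
        then have "d \<le> 2" using G_gdist2[OF xV] W(1) by blast
        then show "d \<in> {0,1,2}" by auto
      qed
      then show "z \<in> ?L" using z W(2) by simp
    qed
    moreover have "finite ?L" by (rule finite_lists_length_eq) simp
    ultimately have "card (GV m) \<le> card ?L" by (rule card_inj_on_le)
    also have "card ?L = 3 ^ k" by (subst card_lists_length_eq) (simp_all add: numeral_3_eq_3)
    finally have c: "card (GV m) \<le> 3 ^ k" .
    have "3 ^ K < (3::nat) ^ k" using c assms by linarith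
    then show ?thesis using power_less_imp_less_exp[of 3 K k] by simp
  qed
  have "?R (mdim (GV m) (GE m))" unfolding mdim_def by (rule LeastI[of _ "card (GV m)"]) (rule ex)
  then show ?thesis by (rule lb)
qed

theorem mainTheorem7:
  fixes \<epsilon> :: real
  assumes "\<epsilon> > 0"
  shows "\<exists>(V :: nat set) E. connected_graph V E \<and> mdim V E > 0 \<and>
           real (cdim V E) / real (mdim V E) \<le> \<epsilon>"
proof -
  define K where "K = nat \<lceil>2 / \<epsilon>\<rceil>"
  have K: "2 / \<epsilon> \<le> real K" unfolding K_def by linarith
  define m where "m = (3::nat) ^ K"
  have m1: "1 \<le> m" unfolding m_def by simp
  have "card (GV m) = 2 * m + 1" unfolding GV_def by simp
  then have "card (GV m) > 3 ^ K" unfolding m_def by simp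
  then have md: "mdim (GV m) (GE m) \<ge> Suc K" by (rule G_mdim)
  have cd: "cdim (GV m) (GE m) \<le> 2" using G_cdim[OF m1] .
  have "real (cdim (GV m) (GE m)) / real (mdim (GV m) (GE m)) \<le> 2 / real (mdim (GV m) (GE m))"
    using cd md by (intro divide_right_mono) auto
  also have "\<dots> \<le> 2 / real (Suc K)" using md by (intro divide_left_mono) auto
  also have "\<dots> \<le> \<epsilon>"
  proof -
    have "2 \<le> \<epsilon> * real K" using K assms by (simp add: field_simps)
    then have "2 \<le> \<epsilon> * real (Suc K)" using assms by (simp add: algebra_simps)
    then show ?thesis using assms by (simp add: field_simps)
  qed
  finally show ?thesis using G_conn md by (intro exI[of _ "GV m"] exI[of _ "GE m"]) auto
qed

end
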